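(* Fix $q\in Q$, $a\in A$ and $k$, write $\epsilon:=\varepsilon^s$, and consider $$G(\lambda,\mu):=\sum_{j\in\overline{\mathcal N}^{q,a}}\min\big\{\underline P(q,a,q_j)(h_j(\mu)-\lambda),\ \overline P(q,a,q_j)(h_j(\mu)-\lambda)\big\}-\mu\epsilon+\lambda,$$ $$h_j(\mu):=\min_{i\in\overline{\mathcal N}^{q,a}_W}\{\underline p^k(q_i)+\mu\,c(q_i,q_j)\},$$ for $\lambda\in\mathbb R$, $\mu\ge0$. Then $G$ is concave, the optimal value of $\max_{\mu\ge0,\lambda\in\mathbb R}G(\lambda,\mu)$ equals the optimal value of the linear program (LP) below, and for every $\mu\ge0$, $$\max_{\lambda\in\mathbb R}G(\lambda,\mu)=\max_{j\in\overline{\mathcal N}^{q,a}}G(h_j(\mu),\mu).$$ The linear program (LP) is: minimize $\sum_{i\in\overline{\mathcal N}^{q,a}_W}\gamma_i\underline p^k(q_i)$ over $\gamma_i,\widehat\gamma_j,\pi_{ij}$ subject to $\underline P(q,a,q_j)\le\widehat\gamma_j\le\overline P(q,a,q_j)$ ($j\in\overline{\mathcal N}^{q,a}$), $\sum_{j}\widehat\gamma_j=1$, $\pi_{ij}\ge0$, $\sum_{i\in\overline{\mathcal N}^{q,a}_W}\pi_{ij}=\widehat\gamma_j$ ($j\in\overline{\mathcal N}^{q,a}$), $\sum_{j\in\overline{\mathcal N}^{q,a}}\pi_{ij}=\gamma_i$ ($i\in\overline{\mathcal N}^{q,a}_W$), and $\sum_{i,j}\pi_{ij}c(q_i,q_j)\le\epsilon$,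 where $i$ ranges over $\overline{\mathcal N}^{q,a}_W$ and $j$ over $\overline{\mathcal N}^{q,a}$.
   Context: Fix $n\ge1$, $s\ge1$, $\varepsilon\ge0$, a finite mode set $U=\{1,\dots,m\}$, continuous $f_u:\mathbb R^n\to\mathbb R^n$, a nominal Borel probability $\widehat p_v$ on $\mathbb R^n$ with finite $s$-th moment, and a set $W\subseteq\mathbb R^n$ (containing the support of the true noise distribution). Let $T^u_{p_v}(B\mid x):=p_v(\{v:f_u(x)+v\in B\})$. Abstraction. $X\subset\mathbb R^n$ bounded Borel, $X_{\rm tgt}\subset X$; $Q_{\rm safe}$ a finite family of pairwise disjoint Borel sets with union $X$, each either contained in or disjoint from $X_{\rm tgt}$; $Q_{\rm tgt}$ those contained in $X_{\rm tgt}$; $q_u:=\mathbb R^n\setminus X$; $Q:=Q_{\rm safe}\cup\{q_u\}=\{q_1,\dots,q_N\}$ indexed by $\mathcal N=\{1,\dots,N\}$; $A:=U$. Bounds $\underline P\le\overline P$ in $[0,1]$ on $Q\times A\times Q$ with $\sum_{q'}\underline P(q,a,q')\le1\le\sum_{q'}\overline P(q,a,q')$, $\underline P(q,a,q')\le\inf_{x\in q}T^a_{\widehat p_v}(q'\mid x)$, $\overline P(q,a,q')\ge\sup_{x\in q}T^a_{\widehat p_v}(q'\mid x)$ for $q\in Q_{\rm safe}$, and $\underline P(q_u,a,q_u)=\overline P(q_u,a,q_u)=1$. Cost $c(q,q'):=\inf\{\|x-y\|^s:x\in q,y\in q'\}$ (Euclidean norm). Index sets: $\overline{\mathcal N}^{q,a}:=\{i:\overline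 P(q,a,q_i)>0\}$ and $\overline{\mathcal N}^{q,a}_W:=\{i:(f_a(q)+W)\cap q_i\ne\emptyset\}$, with $f_a(q)$ the image of $q$ under $f_a$; it is assumed that $\overline{\mathcal N}^{q,a}\subseteq\overline{\mathcal N}^{q,a}_W$ (the nominal distribution is supported in $W$). $\underline p^k:Q\to[0,1]$ is the $k$-th iterate of the robust dynamic programming recursion: $\underline p^0=\mathbf 1_{Q_{\rm tgt}}$, $\underline p^{k+1}(q)=1$ on $Q_{\rm tgt}$ and otherwise $\max_{a}\min_{\gamma\in\Gamma_{q,a}}\sum_{q'}\gamma(q')\underline p^k(q')$ (for the purposes of the claim only $\underline p^k\ge0$ matters). *)

theory Defs
  imports "HOL-Probability.Probability"
begin

definition trans_kernel ::
  "('a::euclidean_space) measure \<Rightarrow> (nat \<Rightarrow> 'a \<Rightarrow> 'a) \<Rightarrow> nat \<Rightarrow> 'a \<Rightarrow> 'a set \<Rightarrow> real" where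
  "trans_kernel pv f u x B = measure pv {v. f u x + v \<in> B}"

definition region_cost :: "real \<Rightarrow> ('a::euclidean_space) set \<Rightarrow> 'a set \<Rightarrow> real" where
  "region_cost s A B = Inf {norm (x - y) powr s | x y. x \<in> A \<and> y \<in> B}"

definition reach_set :: "('a \<Rightarrow> 'a) \<Rightarrow> ('a::euclidean_space) set \<Rightarrow> 'a set \<Rightarrow> 'a set" where
  "reach_set g A W = {g x + w | x w. x \<in> A \<and> w \<in> W}"

definition hfun :: "(nat \<Rightarrow> real) \<Rightarrow> (nat \<Rightarrow> nat \<Rightarrow> real) \<Rightarrow> nat set \<Rightarrow> nat \<Rightarrow> real \<Rightarrow> real" where
  "hfun p c I j \<mu> = Min ((\<lambda>i. p i + \<mu> * c i j) ` I)"

text \<open>G(lambda, mu); lo j, hi j stand for underline P(q,a,q_j), overline P(q,a,q_j).\<close>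
definition Gfun :: "(nat \<Rightarrow> real) \<Rightarrow> (nat \<Rightarrow> real) \<Rightarrow> (nat \<Rightarrow> real) \<Rightarrow> (nat \<Rightarrow> nat \<Rightarrow> real)
    \<Rightarrow> nat set \<Rightarrow> nat set \<Rightarrow> real \<Rightarrow> real \<Rightarrow> real \<Rightarrow> real" where
  "Gfun lo hi p c I J eps lam \<mu> =
     (\<Sum>j\<in>J. min (lo j * (hfun p c I j \<mu> - lam)) (hi j * (hfun p c I j \<mu> - lam))) - \<mu> * eps + lam"

definition lp_feasible :: "(nat \<Rightarrow> real) \<Rightarrow> (nat \<Rightarrow> real) \<Rightarrow> (nat \<Rightarrow> nat \<Rightarrow> real)
    \<Rightarrow> nat set \<Rightarrow> nat set \<Rightarrow> real
    \<Rightarrow> (nat \<Rightarrow> real) \<Rightarrow> (nat \<Rightarrow> real) \<Rightarrow> (nat \<Rightarrow> nat \<Rightarrow> real) \<Rightarrow> bool" where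
  "lp_feasible lo hi c I J eps \<gamma> \<gamma>h \<pi> \<longleftrightarrow>
     (\<forall>j\<in>J. lo j \<le> \<gamma>h j \<and> \<gamma>h j \<le> hi j) \<and>
     (\<Sum>j\<in>J. \<gamma>h j) = 1 \<and>
     (\<forall>i\<in>I. \<forall>j\<in>J. 0 \<le> \<pi> i j) \<and>
     (\<forall>j\<in>J. (\<Sum>i\<in>I. \<pi> i j) = \<gamma>h j) \<and>
     (\<forall>i\<in>I. (\<Sum>j\<in>J. \<pi> i j) = \<gamma> i) \<and>
     (\<Sum>i\<in>I. \<Sum>j\<in>J. \<pi> i j * c i j) \<le> eps"

definition lp_objective :: "(nat \<Rightarrow> real) \<Rightarrow> nat set \<Rightarrow> (nat \<Rightarrow> real) \<Rightarrow> real" where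
  "lp_objective p I \<gamma> = (\<Sum>i\<in>I. \<gamma> i * p i)"

definition cost_mat :: "real \<Rightarrow> (nat \<Rightarrow> ('a::euclidean_space) set) \<Rightarrow> nat \<Rightarrow> nat \<Rightarrow> real" where
  "cost_mat s R i j = region_cost s (R i) (R j)"

definition idx_W :: "nat \<Rightarrow> (nat \<Rightarrow> 'a \<Rightarrow> 'a) \<Rightarrow> (nat \<Rightarrow> ('a::euclidean_space) set) \<Rightarrow> 'a set
    \<Rightarrow> nat \<Rightarrow> nat \<Rightarrow> nat set" where
  "idx_W N f R W q u = {i\<in>{1..N}. reach_set (f u) (R q) W \<inter> R i \<noteq> {}}"

definition idx_P :: "nat \<Rightarrow> (nat \<Rightarrow> nat \<Rightarrow> nat \<Rightarrow> real) \<Rightarrow> nat \<Rightarrow> nat \<Rightarrow> nat set" where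
  "idx_P N hi q u = {i\<in>{1..N}. hi q u i > 0}"

end

theory Submission
  imports Defs
begin


locale lpsetup =
  fixes lo hi p :: "nat \<Rightarrow> real" and c :: "nat \<Rightarrow> nat \<Rightarrow> real" and I J :: "nat set" and eps :: real
  assumes finI: "finite I" and JI: "J \<subseteq> I" and Jne: "J \<noteq> {}"
    and p_nn: "\<forall>i\<in>I. 0 \<le> p i" and c_nn: "\<forall>i\<in>I. \<forall>j\<in>J. 0 \<le> c i j"
    and c_diag: "\<forall>j\<in>J. c j j = 0"
    and lo_nn: "\<forall>j\<in>J. 0 \<le> lo j" and lo_hi: "\<forall>j\<in>J. lo j \<le> hi j"
    and slo: "(\<Sum>j\<in>J. lo j) \<le> 1" and shi: "1 \<le> (\<Sum>j\<in>J. hi j)" and eps_nn: "0 \<le> eps"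
begin

lemma finJ: "finite J" using finI JI finite_subset by blast

lemma Ine: "I \<noteq> {}" using JI Jne by blast

lemma inner_weak:
  assumes "\<forall>j\<in>J. lo j \<le> g j \<and> g j \<le> hi j" "(\<Sum>j\<in>J. g j) = 1"
  shows "(\<Sum>j\<in>J. min (lo j * (v j - l)) (hi j * (v j - l))) + l \<le> (\<Sum>j\<in>J. g j * v j)"
proof -
  have "(\<Sum>j\<in>J. min (lo j * (v j - l)) (hi j * (v j - l))) \<le> (\<Sum>j\<in>J. g j * (v j - l))"
  proof (rule sum_mono)
    fix j assume j: "j \<in> J"
    show "min (lo j * (v j - l)) (hi j * (v j - l)) \<le> g j * (v j - l)"
    proof (cases "0 \<le> v j - l")
      case True
      then have "lo j * (v j - l) \<le> g j * (v j - l)" using assms(1) j by (simp add: mult_right_mono)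
      then show ?thesis by linarith
    next
      case False
      then have "hi j * (v j - l) \<le> g j * (v j - l)" using assms(1) j by (simp add: mult_right_mono_neg)
      then show ?thesis by linarith
    qed
  qed
  also have "\<dots> = (\<Sum>j\<in>J. g j * v j) - l * (\<Sum>j\<in>J. g j)"
    by (simp add: right_diff_distrib sum_subtractf sum_distrib_left mult.commute)
  finally show ?thesis using assms(2) by simp
qed

lemma inner_strong:
  fixes v :: "nat \<Rightarrow> real"
  shows "\<exists>j0\<in>J. \<exists>g. (\<forall>j\<in>J. lo j \<le> g j \<and> g j \<le> hi j) \<and> (\<Sum>j\<in>J. g j) = 1 \<and>
     (\<Sum>j\<in>J. min (lo j * (v j - v j0)) (hi j * (v j - v j0))) + v j0 = (\<Sum>j\<in>J. g j * v j)"
proof -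
  define A where "A t = (\<Sum>j\<in>J. if v j \<le> t then hi j else lo j)" for t
  define T where "T = {t \<in> v ` J. 1 \<le> A t}"
  have finT: "finite T" using finJ by (simp add: T_def)
  have "Max (v ` J) \<in> T"
  proof -
    have "Max (v ` J) \<in> v ` J" using finJ Jne by (intro Max_in) auto
    moreover have "A (Max (v ` J)) = (\<Sum>j\<in>J. hi j)"
      unfolding A_def using finJ by (intro sum.cong) auto
    ultimately show ?thesis using shi by (simp add: T_def)
  qed
  then have Tne: "T \<noteq> {}" by auto
  define t0 where "t0 = Min T"
  have t0T: "t0 \<in> T" using finT Tne by (simp add: t0_def)
  then obtain j0 where j0: "j0 \<in> J" "v j0 = t0" by (auto simp: T_def)
  have At0: "1 \<le> A t0" using t0T by (simp add: T_def)
  define B where "B = (\<Sum>j\<in>J. if v j < t0 then hi j else lo j)"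
  have B1: "B \<le> 1"
  proof (cases "\<exists>j\<in>J. v j < t0")
    case True
    define L where "L = {t \<in> v ` J. t < t0}"
    define s where "s = Max L"
    have finL: "finite L" using finJ by (simp add: L_def)
    have Lne: "L \<noteq> {}" using True by (auto simp: L_def)
    have sin: "s \<in> L" using finL Lne by (simp add: s_def)
    have "s \<notin> T"
    proof
      assume "s \<in> T"
      then have "t0 \<le> s" using finT by (simp add: t0_def)
      then show False using sin by (simp add: L_def)
    qed
    then have As: "A s < 1" using sin by (auto simp: T_def L_def)
    have "A s = B"
      unfolding A_def B_def
    proof (intro sum.cong refl)
      fix j assume j: "j \<in> J"
      have "v j \<le> s \<longleftrightarrow> v j < t0"
      proof
        assume "v j \<le> s" then show "v j < t0" using sin by (simp add: L_def)
      next
        assume "v j < t0" then have "v j \<in> L" using j by (simp add: L_def)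
        then show "v j \<le> s" using finL by (simp add: s_def)
      qed
      then show "(if v j \<le> s then hi j else lo j) = (if v j < t0 then hi j else lo j)" by simp
    qed
    then show ?thesis using As by simp
  next
    case False
    then have "B = (\<Sum>j\<in>J. lo j)" unfolding B_def by (intro sum.cong) auto
    then show ?thesis using slo by simp
  qed
  have AB: "A t0 - B = (\<Sum>j\<in>J. if v j = t0 then hi j - lo j else 0)"
    unfolding A_def B_def sum_subtractf[symmetric] by (intro sum.cong) auto
  have AB0: "0 \<le> A t0 - B" unfolding AB using lo_hi by (intro sum_nonneg) auto
  define th where "th = (if A t0 = B then 0 else (1 - B) / (A t0 - B))"
  have th0: "0 \<le> th" and th1: "th \<le> 1"
    using AB0 B1 At0 by (auto simp: th_def divide_simps)
  have thAB: "B + th * (A t0 - B) = 1"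
    using AB0 B1 At0 by (auto simp: th_def divide_simps)
  define g where "g j = (if v j < t0 then hi j else if v j = t0 then lo j + th * (hi j - lo j) else lo j)" for j
  have box: "\<forall>j\<in>J. lo j \<le> g j \<and> g j \<le> hi j"
  proof
    fix j assume j: "j \<in> J"
    have "0 \<le> th * (hi j - lo j)" "th * (hi j - lo j) \<le> hi j - lo j"
      using th0 th1 lo_hi j by (auto simp: mult_left_le_one_le)
    then show "lo j \<le> g j \<and> g j \<le> hi j" using lo_hi j by (auto simp: g_def)
  qed
  have "(\<Sum>j\<in>J. g j) = (\<Sum>j\<in>J. (if v j < t0 then hi j else lo j) + th * (if v j = t0 then hi j - lo j else 0))"
    by (intro sum.cong) (auto simp: g_def)
  also have "\<dots> = B + th * (A t0 - B)"
  proof -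
    have "(\<Sum>j\<in>J. th * (if v j = t0 then hi j - lo j else 0)) = th * (A t0 - B)"
      by (simp only: AB sum_distrib_left)
    then show ?thesis by (simp only: sum.distrib B_def)
  qed
  finally have gsum: "(\<Sum>j\<in>J. g j) = 1" using thAB by simp
  have "(\<Sum>j\<in>J. min (lo j * (v j - t0)) (hi j * (v j - t0))) = (\<Sum>j\<in>J. g j * (v j - t0))"
  proof (intro sum.cong refl)
    fix j assume j: "j \<in> J"
    consider "v j < t0" | "v j = t0" | "v j > t0" by linarith
    then show "min (lo j * (v j - t0)) (hi j * (v j - t0)) = g j * (v j - t0)"
    proof cases
      case 1
      then have "hi j * (v j - t0) \<le> lo j * (v j - t0)" using lo_hi j by (simp add: mult_right_mono_neg)
      then show ?thesis using 1 by (simp add: g_def min_def)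
    next
      case 2 then show ?thesis by (simp add: g_def)
    next
      case 3
      then have "lo j * (v j - t0) \<le> hi j * (v j - t0)" using lo_hi j by (simp add: mult_right_mono)
      then show ?thesis using 3 by (simp add: g_def min_def)
    qed
  qed
  also have "\<dots> = (\<Sum>j\<in>J. g j * v j) - t0 * (\<Sum>j\<in>J. g j)"
    by (simp add: right_diff_distrib sum_subtractf sum_distrib_left mult.commute)
  finally have "(\<Sum>j\<in>J. min (lo j * (v j - v j0)) (hi j * (v j - v j0))) + v j0 = (\<Sum>j\<in>J. g j * v j)"
    using gsum j0 by simp
  then show ?thesis using j0 box gsum by blast
qed

abbreviation h where "h j \<mu> \<equiv> hfun p c I j \<mu>"
abbreviation G where "G \<equiv> Gfun lo hi p c I J eps"

lemma h_le: "i \<in> I \<Longrightarrow> h j \<mu> \<le> p i + \<mu> * c i j"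
  unfolding hfun_def using finI by (intro Min_le) auto

lemma h_attain: "\<exists>i\<in>I. h j \<mu> = p i + \<mu> * c i j"
proof -
  have "h j \<mu> \<in> (\<lambda>i. p i + \<mu> * c i j) ` I" unfolding hfun_def using finI Ine by (intro Min_in) auto
  then show ?thesis by auto
qed

lemma G_eq: "G l \<mu> = (\<Sum>j\<in>J. min (lo j * (h j \<mu> - l)) (hi j * (h j \<mu> - l))) - \<mu> * eps + l"
  by (simp add: Gfun_def)

lemma max_part: "(\<forall>l. G l \<mu> \<le> (MAX j\<in>J. G (h j \<mu>) \<mu>)) \<and> (\<exists>l. G l \<mu> = (MAX j\<in>J. G (h j \<mu>) \<mu>))"
proof -
  obtain j0 g where j0: "j0 \<in> J" and box: "\<forall>j\<in>J. lo j \<le> g j \<and> g j \<le> hi j" and gs: "(\<Sum>j\<in>J. g j) = 1"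
    and eq: "(\<Sum>j\<in>J. min (lo j * (h j \<mu> - h j0 \<mu>)) (hi j * (h j \<mu> - h j0 \<mu>))) + h j0 \<mu> = (\<Sum>j\<in>J. g j * h j \<mu>)"
    using inner_strong[of "\<lambda>j. h j \<mu>"] by blast
  have key: "G l \<mu> \<le> G (h j0 \<mu>) \<mu>" for l
    using inner_weak[OF box gs, of "\<lambda>j. h j \<mu>" l] eq by (simp add: G_eq)
  have gm: "G (h j0 \<mu>) \<mu> \<le> (MAX j\<in>J. G (h j \<mu>) \<mu>)" using finJ j0 by (intro Max_ge) auto
  have "(MAX j\<in>J. G (h j \<mu>) \<mu>) \<in> (\<lambda>j. G (h j \<mu>) \<mu>) ` J" using finJ Jne by (intro Max_in) auto
  then obtain j1 where j1: "j1 \<in> J" "(MAX j\<in>J. G (h j \<mu>) \<mu>) = G (h j1 \<mu>) \<mu>" by blast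
  show ?thesis
  proof
    show "\<forall>l. G l \<mu> \<le> (MAX j\<in>J. G (h j \<mu>) \<mu>)" using key gm order_trans by blast
    show "\<exists>l. G l \<mu> = (MAX j\<in>J. G (h j \<mu>) \<mu>)" using j1 by metis
  qed
qed

lemma concave: "concave_on (UNIV \<times> {0..}) (\<lambda>(l, \<mu>). G l \<mu>)"
  unfolding concave_on_iff
proof (intro conjI ballI allI impI)
  show "convex (UNIV \<times> {(0::real)..})" by (intro convex_Times) auto
next
  fix x y :: "real \<times> real" and u v :: real
  assume x: "x \<in> UNIV \<times> {0..}" and y: "y \<in> UNIV \<times> {0..}" and u: "0 \<le> u" and v: "0 \<le> v" and uv: "u + v = 1"
  obtain l1 m1 where x': "x = (l1, m1)" by (cases x)
  obtain l2 m2 where y': "y = (l2, m2)" by (cases y)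
  have hc: "u * h j m1 + v * h j m2 \<le> h j (u * m1 + v * m2)" for j
    unfolding hfun_def[of p c I j "u * m1 + v * m2"]
  proof (intro Min.boundedI)
    show "finite ((\<lambda>i. p i + (u * m1 + v * m2) * c i j) ` I)" using finI by simp
    show "(\<lambda>i. p i + (u * m1 + v * m2) * c i j) ` I \<noteq> {}" using Ine by simp
  next
    fix a assume "a \<in> (\<lambda>i. p i + (u * m1 + v * m2) * c i j) ` I"
    then obtain i where i: "i \<in> I" and a: "a = p i + (u * m1 + v * m2) * c i j" by auto
    have "u * h j m1 \<le> u * (p i + m1 * c i j)" using h_le[OF i] u by (simp add: mult_left_mono)
    moreover have "v * h j m2 \<le> v * (p i + m2 * c i j)" using h_le[OF i] v by (simp add: mult_left_mono)
    moreover have "u * (p i + m1 * c i j) + v * (p i + m2 * c i j) = a"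
    proof -
      have "u * (p i + m1 * c i j) + v * (p i + m2 * c i j) = (u + v) * p i + (u * m1 + v * m2) * c i j"
        by (simp add: algebra_simps)
      then show ?thesis using uv a by simp
    qed
    ultimately show "u * hfun p c I j m1 + v * hfun p c I j m2 \<le> a" by linarith
  qed
  define gg where "gg j t = min (lo j * t) (hi j * t)" for j t
  have gmono: "gg j s \<le> gg j t" if "s \<le> t" "j \<in> J" for j s t
    using that lo_nn lo_hi unfolding gg_def
    by (meson min.mono mult_left_mono order_trans)
  have gconc: "u * gg j s + v * gg j t \<le> gg j (u * s + v * t)" if "j \<in> J" for j s t
  proof -
    have "u * gg j s + v * gg j t \<le> lo j * (u * s + v * t)"
    proof -
      have "u * gg j s \<le> u * (lo j * s)" using u by (simp add: gg_def mult_left_mono)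
      moreover have "v * gg j t \<le> v * (lo j * t)" using v by (simp add: gg_def mult_left_mono)
      ultimately show ?thesis by (simp add: algebra_simps)
    qed
    moreover have "u * gg j s + v * gg j t \<le> hi j * (u * s + v * t)"
    proof -
      have "u * gg j s \<le> u * (hi j * s)" using u by (simp add: gg_def mult_left_mono)
      moreover have "v * gg j t \<le> v * (hi j * t)" using v by (simp add: gg_def mult_left_mono)
      ultimately show ?thesis by (simp add: algebra_simps)
    qed
    ultimately show ?thesis by (simp add: gg_def)
  qed
  have trm: "u * gg j (h j m1 - l1) + v * gg j (h j m2 - l2) \<le> gg j (h j (u * m1 + v * m2) - (u * l1 + v * l2))"
    if j: "j \<in> J" for j
  proof -
    have "u * (h j m1 - l1) + v * (h j m2 - l2) \<le> h j (u * m1 + v * m2) - (u * l1 + v * l2)"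
      using hc[of j] by (simp add: algebra_simps)
    then have "gg j (u * (h j m1 - l1) + v * (h j m2 - l2)) \<le> gg j (h j (u * m1 + v * m2) - (u * l1 + v * l2))"
      by (rule gmono[OF _ j])
    moreover have "u * gg j (h j m1 - l1) + v * gg j (h j m2 - l2) \<le> gg j (u * (h j m1 - l1) + v * (h j m2 - l2))"
      by (rule gconc[OF j])
    ultimately show ?thesis by linarith
  qed
  have "u * G l1 m1 + v * G l2 m2 =
     (\<Sum>j\<in>J. u * gg j (h j m1 - l1) + v * gg j (h j m2 - l2)) - (u * m1 + v * m2) * eps + (u * l1 + v * l2)"
    by (simp add: G_eq gg_def sum.distrib sum_distrib_left algebra_simps)
  also have "\<dots> \<le> (\<Sum>j\<in>J. gg j (h j (u * m1 + v * m2) - (u * l1 + v * l2))) - (u * m1 + v * m2) * eps + (u * l1 + v * l2)"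
    using trm by (simp add: sum_mono)
  also have "\<dots> = G (u * l1 + v * l2) (u * m1 + v * m2)"
    by (simp add: G_eq gg_def)
  finally show "u * (case x of (l, \<mu>) \<Rightarrow> G l \<mu>) + v * (case y of (l, \<mu>) \<Rightarrow> G l \<mu>)
       \<le> (case u *\<^sub>R x + v *\<^sub>R y of (l, \<mu>) \<Rightarrow> G l \<mu>)"
    by (simp add: x' y')
qed

end



lemma cont_coord2: "continuous_on S (\<lambda>\<pi>::nat\<Rightarrow>nat\<Rightarrow>real. \<pi> i j)"
proof -
  have "continuous_on UNIV (\<lambda>\<pi>::nat\<Rightarrow>nat\<Rightarrow>real. \<pi> i)" by (rule continuous_on_product_coordinates)
  then have "continuous_on UNIV (\<lambda>\<pi>::nat\<Rightarrow>nat\<Rightarrow>real. (\<pi> i) j)" by (rule continuous_on_product_then_coordinatewise)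
  then show ?thesis by (rule continuous_on_subset) simp
qed

lemma compact_box2:
  assumes "\<And>i j. compact (B i j :: real set)"
  shows "compact {\<pi>::nat\<Rightarrow>nat\<Rightarrow>real. \<forall>i j. \<pi> i j \<in> B i j}"
proof -
  have c1: "compact (PiE UNIV (B i))" for i
    using compactin_PiE[of "\<lambda>_. euclidean" UNIV "B i"] assms
    by (simp add: euclidean_product_topology)
  have "compact (PiE UNIV (\<lambda>i. PiE UNIV (B i)))"
    using compactin_PiE[of "\<lambda>_. euclidean" UNIV "\<lambda>i. PiE UNIV (B i)"] c1
    by (simp add: euclidean_product_topology)
  moreover have "PiE UNIV (\<lambda>i. PiE UNIV (B i)) = {\<pi>. \<forall>i j. \<pi> i j \<in> B i j}"
    by (auto simp: PiE_iff)
  ultimately show ?thesis by simp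
qed

lemma closed_Collect_ball: "(\<And>i. i \<in> A \<Longrightarrow> closed {x. P i x}) \<Longrightarrow> closed {x. \<forall>i\<in>A. P i x}"
proof -
  assume "\<And>i. i \<in> A \<Longrightarrow> closed {x. P i x}"
  then have "closed (\<Inter>i\<in>A. {x. P i x})" by (intro closed_INT) auto
  moreover have "(\<Inter>i\<in>A. {x. P i x}) = {x. \<forall>i\<in>A. P i x}" by auto
  ultimately show ?thesis by simp
qed

context lpsetup begin

definition inK :: "(nat \<Rightarrow> nat \<Rightarrow> real) \<Rightarrow> bool" where
  "inK \<pi> \<longleftrightarrow> (\<forall>i\<in>I. \<forall>j\<in>J. 0 \<le> \<pi> i j) \<and> (\<forall>j\<in>J. lo j \<le> (\<Sum>i\<in>I. \<pi> i j) \<and> (\<Sum>i\<in>I. \<pi> i j) \<le> hi j)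
     \<and> (\<Sum>j\<in>J. \<Sum>i\<in>I. \<pi> i j) = 1"
definition Lf :: "(nat \<Rightarrow> nat \<Rightarrow> real) \<Rightarrow> real" where "Lf \<pi> = (\<Sum>i\<in>I. \<Sum>j\<in>J. \<pi> i j * p i)"
definition Cf :: "(nat \<Rightarrow> nat \<Rightarrow> real) \<Rightarrow> real" where "Cf \<pi> = (\<Sum>i\<in>I. \<Sum>j\<in>J. \<pi> i j * c i j)"

lemma inK_colsum:
  assumes "inK \<pi>" "\<forall>i\<in>I. \<forall>j\<in>J. 0 \<le> \<pi>' i j" "\<forall>j\<in>J. (\<Sum>i\<in>I. \<pi>' i j) = (\<Sum>i\<in>I. \<pi> i j)"
  shows "inK \<pi>'"
  using assms by (simp add: inK_def)

lemma inK_comb: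
  assumes "inK \<pi>1" "inK \<pi>2" "0 \<le> t" "t \<le> 1"
  shows "inK (\<lambda>i j. t * \<pi>1 i j + (1 - t) * \<pi>2 i j)"
proof -
  have cs: "(\<Sum>i\<in>I. t * \<pi>1 i j + (1 - t) * \<pi>2 i j) = t * (\<Sum>i\<in>I. \<pi>1 i j) + (1 - t) * (\<Sum>i\<in>I. \<pi>2 i j)" for j
    by (simp add: sum.distrib sum_distrib_left)
  have tot: "(\<Sum>j\<in>J. \<Sum>i\<in>I. t * \<pi>1 i j + (1 - t) * \<pi>2 i j) = t * (\<Sum>j\<in>J. \<Sum>i\<in>I. \<pi>1 i j) + (1 - t) * (\<Sum>j\<in>J. \<Sum>i\<in>I. \<pi>2 i j)"
    by (simp add: cs sum.distrib sum_distrib_left)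
  have nn: "\<forall>i\<in>I. \<forall>j\<in>J. 0 \<le> t * \<pi>1 i j + (1 - t) * \<pi>2 i j"
    using assms by (simp add: inK_def)
  have bd: "lo j \<le> (\<Sum>i\<in>I. t * \<pi>1 i j + (1 - t) * \<pi>2 i j) \<and> (\<Sum>i\<in>I. t * \<pi>1 i j + (1 - t) * \<pi>2 i j) \<le> hi j"
    if j: "j \<in> J" for j
  proof -
    let ?a = "\<Sum>i\<in>I. \<pi>1 i j" and ?b = "\<Sum>i\<in>I. \<pi>2 i j"
    have a: "lo j \<le> ?a" "?a \<le> hi j" and b: "lo j \<le> ?b" "?b \<le> hi j" using assms(1,2) j by (auto simp: inK_def)
    have "t * ?a + (1 - t) * ?b \<le> hi j" using a b assms(3,4) by (intro convex_bound_le) auto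
    moreover have "lo j \<le> t * ?a + (1 - t) * ?b"
    proof -
      have "t * lo j \<le> t * ?a" "(1 - t) * lo j \<le> (1 - t) * ?b"
        using a b assms(3,4) by (auto intro: mult_left_mono)
      then show ?thesis by (simp add: algebra_simps)
    qed
    ultimately show ?thesis by (simp add: cs)
  qed
  show ?thesis using nn bd tot assms(1,2) by (simp add: inK_def)
qed

lemma Lf_comb: "Lf (\<lambda>i j. t * \<pi>1 i j + (1 - t) * \<pi>2 i j) = t * Lf \<pi>1 + (1 - t) * Lf \<pi>2"
  by (simp add: Lf_def sum.distrib sum_distrib_left distrib_right mult.assoc)

lemma Cf_comb: "Cf (\<lambda>i j. t * \<pi>1 i j + (1 - t) * \<pi>2 i j) = t * Cf \<pi>1 + (1 - t) * Cf \<pi>2"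
  by (simp add: Cf_def sum.distrib sum_distrib_left distrib_right mult.assoc)

lemma Cf_nn: "inK \<pi> \<Longrightarrow> 0 \<le> Cf \<pi>"
  unfolding Cf_def inK_def using c_nn by (intro sum_nonneg) auto

lemma sel_sum:
  fixes X :: "nat \<Rightarrow> real" and w :: "nat \<Rightarrow> nat \<Rightarrow> real"
  assumes "\<forall>j\<in>J. sel j \<in> I"
  shows "(\<Sum>i\<in>I. \<Sum>j\<in>J. (if i = sel j then X j else 0) * w i j) = (\<Sum>j\<in>J. X j * w (sel j) j)"
proof -
  have "(\<Sum>i\<in>I. \<Sum>j\<in>J. (if i = sel j then X j else 0) * w i j) = (\<Sum>j\<in>J. \<Sum>i\<in>I. (if i = sel j then X j * w i j else 0))"
    by (subst sum.swap) (intro sum.cong refl; simp)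
  also have "\<dots> = (\<Sum>j\<in>J. X j * w (sel j) j)"
    using assms finI by (intro sum.cong refl) (simp add: sum.delta')
  finally show ?thesis .
qed

lemma sel_colsum:
  fixes X :: "nat \<Rightarrow> real"
  assumes "sel j \<in> I"
  shows "(\<Sum>i\<in>I. (if i = sel j then X j else 0)) = X j"
  using assms finI by (simp add: sum.delta')

lemma sel_inK:
  assumes sel: "\<forall>j\<in>J. sel j \<in> I" and box: "\<forall>j\<in>J. lo j \<le> g j \<and> g j \<le> hi j" and gs: "(\<Sum>j\<in>J. g j) = 1"
  shows "inK (\<lambda>i j. if i = sel j then g j else 0)"
    and "Lf (\<lambda>i j. if i = sel j then g j else 0) = (\<Sum>j\<in>J. g j * p (sel j))"
    and "Cf (\<lambda>i j. if i = sel j then g j else 0) = (\<Sum>j\<in>J. g j * c (sel j) j)"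
proof -
  have cs: "\<forall>j\<in>J. (\<Sum>i\<in>I. (if i = sel j then g j else 0)) = g j"
    using sel by (auto intro: sel_colsum)
  show "inK (\<lambda>i j. if i = sel j then g j else 0)"
  proof -
    have "\<forall>i\<in>I. \<forall>j\<in>J. 0 \<le> (if i = sel j then g j else 0)"
    proof (intro ballI)
      fix i j assume j: "j \<in> J"
      have "0 \<le> g j" using box lo_nn j by (meson order_trans)
      then show "0 \<le> (if i = sel j then g j else 0)" by simp
    qed
    moreover have "(\<Sum>j\<in>J. \<Sum>i\<in>I. (if i = sel j then g j else 0)) = 1"
      using cs gs by simp
    ultimately show ?thesis unfolding inK_def using cs box by simp
  qed
  show "Lf (\<lambda>i j. if i = sel j then g j else 0) = (\<Sum>j\<in>J. g j * p (sel j))"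
    unfolding Lf_def by (rule sel_sum[OF sel, of g "\<lambda>i j. p i"])
  show "Cf (\<lambda>i j. if i = sel j then g j else 0) = (\<Sum>j\<in>J. g j * c (sel j) j)"
    unfolding Cf_def by (rule sel_sum[OF sel, of g c])
qed

lemma box_ex: "\<exists>g. (\<forall>j\<in>J. lo j \<le> g j \<and> g j \<le> hi j) \<and> (\<Sum>j\<in>J. g j) = 1"
  using inner_strong[of "\<lambda>_. 0"] by blast

lemma inK_ex: "\<exists>\<pi>. inK \<pi> \<and> Cf \<pi> = 0"
proof -
  obtain g where box: "\<forall>j\<in>J. lo j \<le> g j \<and> g j \<le> hi j" and gs: "(\<Sum>j\<in>J. g j) = 1" using box_ex by blast
  have sel: "\<forall>j\<in>J. (\<lambda>j. j) j \<in> I" using JI by auto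
  show ?thesis using sel_inK[OF sel box gs] c_diag by auto
qed

lemma attain:
  assumes e: "0 \<le> e"
  shows "\<exists>\<pi>. inK \<pi> \<and> Cf \<pi> \<le> e \<and> (\<forall>\<pi>'. inK \<pi>' \<and> Cf \<pi>' \<le> e \<longrightarrow> Lf \<pi> \<le> Lf \<pi>')"
proof -
  define S where "S = {\<pi>. inK \<pi> \<and> Cf \<pi> \<le> e \<and> (\<forall>i j. \<not> (i \<in> I \<and> j \<in> J) \<longrightarrow> \<pi> i j = 0)}"
  define B where "B i j = (if i \<in> I \<and> j \<in> J then {0..hi j} else {0::real})" for i j
  define R where "R \<pi> = (\<lambda>i j. if i \<in> I \<and> j \<in> J then \<pi> i j else (0::real))" for \<pi> :: "nat \<Rightarrow> nat \<Rightarrow> real"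
  have R: "inK (R \<pi>) = inK \<pi>" "Lf (R \<pi>) = Lf \<pi>" "Cf (R \<pi>) = Cf \<pi>" for \<pi>
    unfolding R_def inK_def Lf_def Cf_def by (auto intro!: sum.cong)
  have RS: "inK \<pi> \<Longrightarrow> Cf \<pi> \<le> e \<Longrightarrow> R \<pi> \<in> S" for \<pi>
    using R by (auto simp: S_def R_def)
  have sub: "S \<subseteq> {\<pi>. \<forall>i j. \<pi> i j \<in> B i j}"
  proof (safe)
    fix \<pi> i j assume "\<pi> \<in> S"
    then have K: "inK \<pi>" and z: "\<forall>i j. \<not> (i \<in> I \<and> j \<in> J) \<longrightarrow> \<pi> i j = 0" by (auto simp: S_def)
    show "\<pi> i j \<in> B i j"
    proof (cases "i \<in> I \<and> j \<in> J")
      case True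
      then have "0 \<le> \<pi> i j" "\<pi> i j \<le> (\<Sum>i'\<in>I. \<pi> i' j)" "(\<Sum>i'\<in>I. \<pi> i' j) \<le> hi j"
        using K finI by (auto simp: inK_def intro!: member_le_sum)
      then show ?thesis using True by (simp add: B_def)
    next
      case False then show ?thesis using z by (auto simp: B_def)
    qed
  qed
  have cB: "compact {\<pi>. \<forall>i j. \<pi> i j \<in> B i j}" by (intro compact_box2) (simp add: B_def)
  have cl: "closed S"
    unfolding S_def inK_def Cf_def
    by (intro closed_Collect_conj closed_Collect_ball closed_Collect_all closed_Collect_imp
          closed_Collect_le closed_Collect_eq open_Collect_const
          continuous_on_sum continuous_on_mult continuous_on_const cont_coord2)
  have cS: "compact S"
  proof -
    have "compact ({\<pi>. \<forall>i j. \<pi> i j \<in> B i j} \<inter> S)" using cB cl by (rule compact_Int_closed)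
    moreover have "{\<pi>. \<forall>i j. \<pi> i j \<in> B i j} \<inter> S = S" using sub by blast
    ultimately show ?thesis by simp
  qed
  have Sne: "S \<noteq> {}" using inK_ex RS e by fastforce
  have "continuous_on S Lf" unfolding Lf_def by (intro continuous_intros cont_coord2)
  then obtain \<pi> where "\<pi> \<in> S" and mn: "\<forall>y\<in>S. Lf \<pi> \<le> Lf y"
    using continuous_attains_inf[OF cS Sne] by blast
  have K: "inK \<pi>" "Cf \<pi> \<le> e" using \<open>\<pi> \<in> S\<close> by (auto simp: S_def)
  have "Lf \<pi> \<le> Lf \<pi>'" if "inK \<pi>'" "Cf \<pi>' \<le> e" for \<pi>'
    using mn RS[OF that] R(2)[of \<pi>'] by metis
  then show ?thesis using K by blast
qed

end


context lpsetup begin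

lemma lag:
  assumes "inK \<pi>"
  shows "(\<Sum>j\<in>J. (\<Sum>i\<in>I. \<pi> i j) * h j \<mu>) \<le> Lf \<pi> + \<mu> * Cf \<pi>"
proof -
  have "(\<Sum>j\<in>J. (\<Sum>i\<in>I. \<pi> i j) * h j \<mu>) = (\<Sum>j\<in>J. \<Sum>i\<in>I. \<pi> i j * h j \<mu>)"
    by (simp add: sum_distrib_right)
  also have "\<dots> \<le> (\<Sum>j\<in>J. \<Sum>i\<in>I. \<pi> i j * (p i + \<mu> * c i j))"
  proof (intro sum_mono)
    fix j i assume j: "j \<in> J" and i: "i \<in> I"
    have "0 \<le> \<pi> i j" using assms i j by (simp add: inK_def)
    then show "\<pi> i j * h j \<mu> \<le> \<pi> i j * (p i + \<mu> * c i j)" using h_le[OF i] by (rule mult_left_mono[rotated])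
  qed
  also have "\<dots> = (\<Sum>i\<in>I. \<Sum>j\<in>J. \<pi> i j * (p i + \<mu> * c i j))" by (rule sum.swap)
  also have "\<dots> = Lf \<pi> + \<mu> * Cf \<pi>"
    by (simp add: Lf_def Cf_def sum.distrib sum_distrib_left distrib_left mult.left_commute)
  finally show ?thesis .
qed

lemma weak:
  assumes mu: "0 \<le> \<mu>" and K: "inK \<pi>" and C: "Cf \<pi> \<le> eps"
  shows "G l \<mu> \<le> Lf \<pi>"
proof -
  have box: "\<forall>j\<in>J. lo j \<le> (\<Sum>i\<in>I. \<pi> i j) \<and> (\<Sum>i\<in>I. \<pi> i j) \<le> hi j"
    and gs: "(\<Sum>j\<in>J. \<Sum>i\<in>I. \<pi> i j) = 1" using K by (auto simp: inK_def)
  have "G l \<mu> = (\<Sum>j\<in>J. min (lo j * (h j \<mu> - l)) (hi j * (h j \<mu> - l))) + l - \<mu> * eps"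
    by (simp add: G_eq)
  also have "\<dots> \<le> (\<Sum>j\<in>J. (\<Sum>i\<in>I. \<pi> i j) * h j \<mu>) - \<mu> * eps"
    using inner_weak[OF box gs, of "\<lambda>j. h j \<mu>" l] by simp
  also have "\<dots> \<le> Lf \<pi> + \<mu> * Cf \<pi> - \<mu> * eps" using lag[OF K, of \<mu>] by simp
  also have "\<dots> \<le> Lf \<pi>"
  proof -
    have "\<mu> * Cf \<pi> \<le> \<mu> * eps" using mu C by (rule mult_left_mono[rotated])
    then show ?thesis by simp
  qed
  finally show ?thesis .
qed

lemma cmin_ex: "\<exists>cm>0. \<forall>i\<in>I. \<forall>j\<in>J. c i j \<noteq> 0 \<longrightarrow> cm \<le> c i j"
proof (cases "\<exists>i\<in>I. \<exists>j\<in>J. c i j \<noteq> 0")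
  case False then show ?thesis by (intro exI[of _ 1]) auto
next
  case True
  define Z where "Z = {c i j | i j. i \<in> I \<and> j \<in> J \<and> c i j \<noteq> 0}"
  have "Z \<subseteq> (\<lambda>(i, j). c i j) ` (I \<times> J)" by (auto simp: Z_def)
  then have finZ: "finite Z" using finI finJ by (meson finite_SigmaI finite_imageI finite_subset)
  have Zne: "Z \<noteq> {}" using True by (auto simp: Z_def)
  have Zpos: "\<forall>z\<in>Z. 0 < z" using c_nn by (force simp: Z_def)
  have "Min Z \<in> Z" using finZ Zne by (rule Min_in)
  then have "0 < Min Z" using Zpos by blast
  moreover have "\<forall>i\<in>I. \<forall>j\<in>J. c i j \<noteq> 0 \<longrightarrow> Min Z \<le> c i j"
    using finZ by (auto simp: Z_def intro!: Min_le)
  ultimately show ?thesis by blast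
qed

lemma lip: "\<exists>M\<ge>0. \<forall>\<pi>. inK \<pi> \<longrightarrow> eps < Cf \<pi> \<longrightarrow>
             (\<exists>\<pi>'. inK \<pi>' \<and> Cf \<pi>' \<le> eps \<and> Lf \<pi>' \<le> Lf \<pi> + M * (Cf \<pi> - eps))"
proof -
  obtain cm where cm: "0 < cm" "\<forall>i\<in>I. \<forall>j\<in>J. c i j \<noteq> 0 \<longrightarrow> cm \<le> c i j" using cmin_ex by blast
  define P where "P = (\<Sum>i\<in>I. p i)"
  have pP: "p i \<le> P" if "i \<in> I" for i
    unfolding P_def using finI that p_nn by (intro member_le_sum) auto
  have P0: "0 \<le> P" unfolding P_def using p_nn by (intro sum_nonneg) auto
  define M where "M = P / cm"
  have M0: "0 \<le> M" using P0 cm by (simp add: M_def)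
  have main: "\<exists>\<pi>'. inK \<pi>' \<and> Cf \<pi>' \<le> eps \<and> Lf \<pi>' \<le> Lf \<pi> + M * (Cf \<pi> - eps)"
    if K: "inK \<pi>" and gt: "eps < Cf \<pi>" for \<pi>
  proof -
    define C where "C = Cf \<pi>"
    have C0: "0 < C" using gt eps_nn by (simp add: C_def)
    have pnn: "0 \<le> \<pi> i j" if "i \<in> I" "j \<in> J" for i j using K that by (simp add: inK_def)
    define X where "X j = (\<Sum>i\<in>I. if c i j = 0 then 0 else \<pi> i j)" for j
    define D where "D i j = (if c i j = 0 then \<pi> i j else 0) + (if i = j then X j else 0)" for i j
    have Xnn: "0 \<le> X j" if "j \<in> J" for j unfolding X_def using pnn that by (intro sum_nonneg) auto
    have selid: "\<forall>j\<in>J. (\<lambda>j. j) j \<in> I" using JI by auto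
    have DK: "inK D"
    proof (rule inK_colsum[OF K])
      show "\<forall>i\<in>I. \<forall>j\<in>J. 0 \<le> D i j" using pnn Xnn by (simp add: D_def)
      show "\<forall>j\<in>J. (\<Sum>i\<in>I. D i j) = (\<Sum>i\<in>I. \<pi> i j)"
      proof
        fix j assume j: "j \<in> J"
        have "(\<Sum>i\<in>I. D i j) = (\<Sum>i\<in>I. if c i j = 0 then \<pi> i j else 0) + (\<Sum>i\<in>I. if i = j then X j else 0)"
          by (simp add: D_def sum.distrib)
        also have "(\<Sum>i\<in>I. if i = j then X j else 0) = X j" using sel_colsum[of "\<lambda>j. j" j X] j JI by auto
        also have "(\<Sum>i\<in>I. if c i j = 0 then \<pi> i j else 0) + X j = (\<Sum>i\<in>I. \<pi> i j)"
          unfolding X_def sum.distrib[symmetric] by (intro sum.cong) auto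
        finally show "(\<Sum>i\<in>I. D i j) = (\<Sum>i\<in>I. \<pi> i j)" .
      qed
    qed
    have DC: "Cf D = 0"
      unfolding Cf_def using c_diag by (intro sum.neutral ballI) (auto simp: D_def)
    have "Lf D = (\<Sum>i\<in>I. \<Sum>j\<in>J. (if c i j = 0 then \<pi> i j else 0) * p i) + (\<Sum>i\<in>I. \<Sum>j\<in>J. (if i = j then X j else 0) * p i)"
      by (simp add: Lf_def D_def distrib_right sum.distrib)
    also have "(\<Sum>i\<in>I. \<Sum>j\<in>J. (if i = j then X j else 0) * p i) = (\<Sum>j\<in>J. X j * p j)"
      using sel_sum[OF selid, of X "\<lambda>i j. p i"] by simp
    also have "(\<Sum>j\<in>J. X j * p j) = (\<Sum>i\<in>I. \<Sum>j\<in>J. if c i j = 0 then 0 else \<pi> i j * p j)"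
      unfolding X_def sum_distrib_right by (subst sum.swap) (intro sum.cong refl; simp)
    finally have LD: "Lf D = (\<Sum>i\<in>I. \<Sum>j\<in>J. (if c i j = 0 then \<pi> i j else 0) * p i)
        + (\<Sum>i\<in>I. \<Sum>j\<in>J. if c i j = 0 then 0 else \<pi> i j * p j)" .
    have LP: "Lf \<pi> = (\<Sum>i\<in>I. \<Sum>j\<in>J. (if c i j = 0 then \<pi> i j else 0) * p i)
        + (\<Sum>i\<in>I. \<Sum>j\<in>J. if c i j = 0 then 0 else \<pi> i j * p i)"
      unfolding Lf_def sum.distrib[symmetric] by (intro sum.cong refl) auto
    have nn2: "0 \<le> (\<Sum>i\<in>I. \<Sum>j\<in>J. if c i j = 0 then 0 else \<pi> i j * p i)"
      using pnn p_nn by (intro sum_nonneg) auto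
    have up: "(\<Sum>i\<in>I. \<Sum>j\<in>J. if c i j = 0 then 0 else \<pi> i j * p j) \<le> (\<Sum>i\<in>I. \<Sum>j\<in>J. \<pi> i j * c i j * M)"
    proof (intro sum_mono)
      fix i j assume i: "i \<in> I" and j: "j \<in> J"
      show "(if c i j = 0 then 0 else \<pi> i j * p j) \<le> \<pi> i j * c i j * M"
      proof (cases "c i j = 0")
        case True then show ?thesis by simp
      next
        case False
        have cc: "cm \<le> c i j" using cm False i j by blast
        have "p j \<le> P" using pP j JI by blast
        also have "P \<le> c i j * M"
        proof -
          have "P = cm * M" using cm by (simp add: M_def)
          also have "\<dots> \<le> c i j * M" using cc M0 by (rule mult_right_mono)
          finally show ?thesis .
        qed
        finally have "\<pi> i j * p j \<le> \<pi> i j * (c i j * M)" using pnn[OF i j] by (rule mult_left_mono)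
        then show ?thesis using False by (simp add: mult.assoc)
      qed
    qed
    have "(\<Sum>i\<in>I. \<Sum>j\<in>J. \<pi> i j * c i j * M) = M * C"
      by (simp add: C_def Cf_def sum_distrib_left sum_distrib_right mult.commute)
    then have LDle: "Lf D \<le> Lf \<pi> + M * C" using LD LP nn2 up by linarith
    define s where "s = eps / C"
    have s0: "0 \<le> s" and s1: "s \<le> 1" using eps_nn C0 gt by (auto simp: s_def C_def divide_simps)
    have sC: "s * C = eps" using C0 by (simp add: s_def)
    define \<pi>' where "\<pi>' = (\<lambda>i j. s * \<pi> i j + (1 - s) * D i j)"
    have K': "inK \<pi>'" unfolding \<pi>'_def by (rule inK_comb[OF K DK s0 s1])
    have C': "Cf \<pi>' = eps" unfolding \<pi>'_def Cf_comb DC using sC by (simp add: C_def)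
    have "Lf \<pi>' = s * Lf \<pi> + (1 - s) * Lf D" unfolding \<pi>'_def by (rule Lf_comb)
    also have "\<dots> \<le> s * Lf \<pi> + (1 - s) * (Lf \<pi> + M * C)"
      using LDle s1 by (intro add_left_mono mult_left_mono) auto
    also have "\<dots> = Lf \<pi> + M * (C - s * C)" by (simp add: algebra_simps)
    finally have "Lf \<pi>' \<le> Lf \<pi> + M * (Cf \<pi> - eps)" using sC by (simp add: C_def)
    then show ?thesis using K' C' by auto
  qed
  show ?thesis using M0 main by blast
qed

end


context lpsetup begin

lemma strong: "\<exists>l0 \<mu>0 \<pi>0. 0 \<le> \<mu>0 \<and> (\<forall>l \<mu>. 0 \<le> \<mu> \<longrightarrow> G l \<mu> \<le> G l0 \<mu>0) \<and> inK \<pi>0 \<and> Cf \<pi>0 \<le> eps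
   \<and> (\<forall>\<pi>. inK \<pi> \<and> Cf \<pi> \<le> eps \<longrightarrow> Lf \<pi>0 \<le> Lf \<pi>) \<and> G l0 \<mu>0 = Lf \<pi>0"
proof -
  have "\<forall>e. \<exists>\<pi>. 0 \<le> e \<longrightarrow> inK \<pi> \<and> Cf \<pi> \<le> e \<and> (\<forall>\<pi>'. inK \<pi>' \<and> Cf \<pi>' \<le> e \<longrightarrow> Lf \<pi> \<le> Lf \<pi>')"
    using attain by blast
  then obtain opt where opt: "\<And>e. 0 \<le> e \<Longrightarrow> inK (opt e) \<and> Cf (opt e) \<le> e \<and> (\<forall>\<pi>'. inK \<pi>' \<and> Cf \<pi>' \<le> e \<longrightarrow> Lf (opt e) \<le> Lf \<pi>')"
    by metis
  define V where "V e = Lf (opt e)" for e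
  have Vmin: "V e \<le> Lf \<pi>" if "0 \<le> e" "inK \<pi>" "Cf \<pi> \<le> e" for e \<pi>
    using opt[OF that(1)] that by (simp add: V_def)
  have Vmono: "V e' \<le> V e" if "0 \<le> e" "e \<le> e'" for e e'
    using opt[OF that(1)] Vmin[of e' "opt e"] that by (simp add: V_def)
  obtain M where M0: "0 \<le> M" and Mp: "\<And>\<pi>. inK \<pi> \<Longrightarrow> eps < Cf \<pi> \<Longrightarrow>
       \<exists>\<pi>'. inK \<pi>' \<and> Cf \<pi>' \<le> eps \<and> Lf \<pi>' \<le> Lf \<pi> + M * (Cf \<pi> - eps)"
    using lip by blast
  have VM: "V eps - V e' \<le> M * (e' - eps)" if e': "eps < e'" for e'
  proof -
    have o: "inK (opt e')" "Cf (opt e') \<le> e'" using opt[of e'] e' eps_nn by auto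
    show ?thesis
    proof (cases "Cf (opt e') \<le> eps")
      case True
      then have "V eps \<le> V e'" using Vmin[OF eps_nn o(1)] by (simp add: V_def)
      moreover have "0 \<le> M * (e' - eps)" using M0 e' by simp
      ultimately show ?thesis by linarith
    next
      case False
      then obtain \<pi>' where "inK \<pi>'" "Cf \<pi>' \<le> eps" "Lf \<pi>' \<le> Lf (opt e') + M * (Cf (opt e') - eps)"
        using Mp[OF o(1)] by auto
      moreover have "M * (Cf (opt e') - eps) \<le> M * (e' - eps)" using M0 o(2) by (intro mult_left_mono) auto
      ultimately show ?thesis using Vmin[OF eps_nn, of \<pi>'] by (simp add: V_def)
    qed
  qed
  have slope: "(V eps - V e') / (e' - eps) \<le> (V e - V eps) / (eps - e)"
    if e: "0 \<le> e" "e < eps" and e': "eps < e'" for e e'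
  proof -
    define t where "t = (e' - eps) / (e' - e)"
    have t0: "0 \<le> t" and t1: "t \<le> 1" using e e' by (auto simp: t_def divide_simps)
    have oe: "inK (opt e)" "Cf (opt e) \<le> e" using opt[OF e(1)] by auto
    have oe': "inK (opt e')" "Cf (opt e') \<le> e'" using opt[of e'] e' e by auto
    define \<pi> where "\<pi> = (\<lambda>i j. t * opt e i j + (1 - t) * opt e' i j)"
    have K: "inK \<pi>" unfolding \<pi>_def by (rule inK_comb[OF oe(1) oe'(1) t0 t1])
    have "Cf \<pi> = t * Cf (opt e) + (1 - t) * Cf (opt e')" unfolding \<pi>_def by (rule Cf_comb)
    also have "\<dots> \<le> t * e + (1 - t) * e'"
      using oe(2) oe'(2) t0 t1 by (intro add_mono mult_left_mono) auto
    also have "t * e + (1 - t) * e' = eps"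
    proof -
      have te: "t * (e' - e) = e' - eps" using e e' by (simp add: t_def)
      have "t * e + (1 - t) * e' = e' - t * (e' - e)" by (simp add: algebra_simps)
      then show ?thesis using te by simp
    qed
    finally have "Cf \<pi> \<le> eps" .
    then have "V eps \<le> Lf \<pi>" using Vmin[OF eps_nn K] by simp
    also have "Lf \<pi> = t * V e + (1 - t) * V e'" unfolding \<pi>_def V_def by (rule Lf_comb)
    finally have ineq: "V eps \<le> t * V e + (1 - t) * V e'" .
    have "(e' - e) * V eps \<le> (e' - e) * (t * V e + (1 - t) * V e')"
      using ineq e e' by (intro mult_left_mono) auto
    also have "\<dots> = (e' - eps) * V e + (eps - e) * V e'"
    proof -
      have te: "t * (e' - e) = e' - eps" using e e' by (simp add: t_def)
      have "(e' - e) * (t * V e + (1 - t) * V e') = (t * (e' - e)) * V e + ((e' - e) - t * (e' - e)) * V e'"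
        by (simp add: algebra_simps)
      then have "(e' - e) * (t * V e + (1 - t) * V e') = (e' - eps) * V e + ((e' - e) - (e' - eps)) * V e'"
        by (simp only: te)
      then show ?thesis by (simp add: algebra_simps)
    qed
    finally have "(e' - e) * V eps \<le> (e' - eps) * V e + (eps - e) * V e'" .
    then have "(V eps - V e') * (eps - e) \<le> (V e - V eps) * (e' - eps)"
      by (simp add: algebra_simps)
    then show ?thesis using e e' by (simp add: divide_simps)
  qed
  define Q where "Q = (\<lambda>e'. (V eps - V e') / (e' - eps)) ` {eps<..}"
  have Qne: "Q \<noteq> {}" by (auto simp: Q_def)
  have bdd: "bdd_above Q"
  proof (rule bdd_aboveI)
    fix x assume "x \<in> Q"
    then obtain e' where e': "eps < e'" and x: "x = (V eps - V e') / (e' - eps)" by (auto simp: Q_def)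
    show "x \<le> M" using VM[OF e'] e' by (simp add: x pos_divide_le_eq)
  qed
  define \<mu>0 where "\<mu>0 = Sup Q"
  have Qle: "(V eps - V e') / (e' - eps) \<le> \<mu>0" if "eps < e'" for e'
    unfolding \<mu>0_def using that by (intro cSup_upper bdd) (auto simp: Q_def)
  have mu0: "0 \<le> \<mu>0"
  proof -
    have "V (eps + 1) \<le> V eps" using Vmono eps_nn by simp
    then have "0 \<le> (V eps - V (eps + 1)) / ((eps + 1) - eps)" by simp
    also have "\<dots> \<le> \<mu>0" by (rule Qle) simp
    finally show ?thesis .
  qed
  have sub: "V eps - \<mu>0 * (e - eps) \<le> V e" if e: "0 \<le> e" for e
  proof -
    consider "eps < e" | "e = eps" | "e < eps" by linarith
    then show ?thesis
    proof cases
      case 1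
      then have "(V eps - V e) / (e - eps) \<le> \<mu>0" by (rule Qle)
      then have "V eps - V e \<le> \<mu>0 * (e - eps)" using 1 by (simp add: pos_divide_le_eq mult.commute)
      then show ?thesis by simp
    next
      case 2 then show ?thesis by simp
    next
      case 3
      have "\<mu>0 \<le> (V e - V eps) / (eps - e)"
        unfolding \<mu>0_def
      proof (rule cSup_least[OF Qne])
        fix x assume "x \<in> Q"
        then obtain e' where e': "eps < e'" and x: "x = (V eps - V e') / (e' - eps)" by (auto simp: Q_def)
        show "x \<le> (V e - V eps) / (eps - e)" using slope[OF e 3 e'] x by simp
      qed
      then have "\<mu>0 * (eps - e) \<le> V e - V eps" using 3 by (simp add: pos_le_divide_eq)
      then show ?thesis by (simp add: algebra_simps)
    qed
  qed
  have dual: "V eps \<le> Lf \<pi> + \<mu>0 * Cf \<pi> - \<mu>0 * eps" if K: "inK \<pi>" for \<pi>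
  proof -
    have C0: "0 \<le> Cf \<pi>" using Cf_nn[OF K] .
    have "V (Cf \<pi>) \<le> Lf \<pi>" using Vmin[OF C0 K] by simp
    moreover have "V eps - \<mu>0 * (Cf \<pi> - eps) \<le> V (Cf \<pi>)" using sub[OF C0] .
    ultimately show ?thesis by (simp add: algebra_simps)
  qed
  obtain j0 g where j0: "j0 \<in> J" and box: "\<forall>j\<in>J. lo j \<le> g j \<and> g j \<le> hi j" and gs: "(\<Sum>j\<in>J. g j) = 1"
    and eq: "(\<Sum>j\<in>J. min (lo j * (h j \<mu>0 - h j0 \<mu>0)) (hi j * (h j \<mu>0 - h j0 \<mu>0))) + h j0 \<mu>0 = (\<Sum>j\<in>J. g j * h j \<mu>0)"
    using inner_strong[of "\<lambda>j. h j \<mu>0"] by blast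
  have "\<forall>j. \<exists>i. j \<in> J \<longrightarrow> i \<in> I \<and> h j \<mu>0 = p i + \<mu>0 * c i j" using h_attain by blast
  then obtain sel where sel: "\<And>j. j \<in> J \<Longrightarrow> sel j \<in> I \<and> h j \<mu>0 = p (sel j) + \<mu>0 * c (sel j) j"
    by metis
  have selI: "\<forall>j\<in>J. sel j \<in> I" using sel by blast
  note S = sel_inK[OF selI box gs]
  define ps where "ps = (\<lambda>i j. if i = sel j then g j else (0::real))"
  have psK: "inK ps" using S(1) by (simp add: ps_def)
  have "(\<Sum>j\<in>J. g j * h j \<mu>0) = (\<Sum>j\<in>J. g j * p (sel j) + \<mu>0 * (g j * c (sel j) j))"
    using sel by (intro sum.cong refl) (simp add: algebra_simps)
  also have "\<dots> = Lf ps + \<mu>0 * Cf ps"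
    using S(2,3) by (simp add: ps_def sum.distrib sum_distrib_left)
  finally have gh: "(\<Sum>j\<in>J. g j * h j \<mu>0) = Lf ps + \<mu>0 * Cf ps" .
  have Gj0: "G (h j0 \<mu>0) \<mu>0 = (\<Sum>j\<in>J. g j * h j \<mu>0) - \<mu>0 * eps"
    using eq by (simp add: G_eq)
  have ge: "V eps \<le> G (h j0 \<mu>0) \<mu>0" using dual[OF psK] Gj0 gh by simp
  define \<pi>0 where "\<pi>0 = opt eps"
  have o0: "inK \<pi>0" "Cf \<pi>0 \<le> eps" "\<forall>\<pi>. inK \<pi> \<and> Cf \<pi> \<le> eps \<longrightarrow> Lf \<pi>0 \<le> Lf \<pi>"
    using opt[OF eps_nn] by (auto simp: \<pi>0_def)
  have le: "G (h j0 \<mu>0) \<mu>0 \<le> Lf \<pi>0" using weak[OF mu0 o0(1,2)] .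
  have eqG: "G (h j0 \<mu>0) \<mu>0 = Lf \<pi>0" using ge le by (simp add: V_def \<pi>0_def)
  have allG: "\<forall>l \<mu>. 0 \<le> \<mu> \<longrightarrow> G l \<mu> \<le> G (h j0 \<mu>0) \<mu>0"
    using weak[OF _ o0(1,2)] eqG by simp
  show ?thesis using mu0 allG o0 eqG by blast
qed

end


theorem theorem4:
  fixes f :: "nat \<Rightarrow> real^'n \<Rightarrow> real^'n"
    and pv :: "(real^'n) measure"
    and W X Xtgt :: "(real^'n) set"
    and R :: "nat \<Rightarrow> (real^'n) set"
    and lo hi :: "nat \<Rightarrow> nat \<Rightarrow> nat \<Rightarrow> real"
    and p :: "nat \<Rightarrow> real"
    and s \<epsilon> :: real
    and m N iu qi a :: nat
  defines "T \<equiv> trans_kernel pv f"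
    and "c \<equiv> cost_mat s R"
    and "I \<equiv> idx_W N f R W qi a"
    and "J \<equiv> idx_P N hi qi a"
    and "eps \<equiv> \<epsilon> powr s"
    and "G \<equiv> Gfun (lo qi a) (hi qi a) p (cost_mat s R) (idx_W N f R W qi a) (idx_P N hi qi a) (\<epsilon> powr s)"
    and "h \<equiv> (\<lambda>j \<mu>. hfun p (cost_mat s R) (idx_W N f R W qi a) j \<mu>)"
  assumes s_ge: "1 \<le> s" and eps_ge: "0 \<le> \<epsilon>"
    and cont: "\<forall>u\<in>{1..m}. continuous_on UNIV (f u)"
    and pv_prob: "prob_space pv" and pv_sets: "sets pv = sets borel"
    and pv_moment: "integrable pv (\<lambda>v. norm v powr s)"
    and X_bdd: "bounded X" and X_borel: "X \<in> sets borel" and tgt_sub: "Xtgt \<subseteq> X"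
    and iu_in: "iu \<in> {1..N}" and R_iu: "R iu = - X"
    and R_borel: "\<forall>i\<in>{1..N} - {iu}. R i \<in> sets borel"
    and R_tgt: "\<forall>i\<in>{1..N} - {iu}. R i \<subseteq> Xtgt \<or> R i \<inter> Xtgt = {}"
    and R_disj: "\<forall>i\<in>{1..N}. \<forall>j\<in>{1..N}. i \<noteq> j \<longrightarrow> R i \<inter> R j = {}"
    and R_cover: "(\<Union>i\<in>{1..N} - {iu}. R i) = X"
    and bnd_range: "\<forall>q\<in>{1..N}. \<forall>u\<in>{1..m}. \<forall>q'\<in>{1..N}.
                      0 \<le> lo q u q' \<and> lo q u q' \<le> hi q u q' \<and> hi q u q' \<le> 1"
    and bnd_sum: "\<forall>q\<in>{1..N}. \<forall>u\<in>{1..m}.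
                      (\<Sum>q'\<in>{1..N}. lo q u q') \<le> 1 \<and> 1 \<le> (\<Sum>q'\<in>{1..N}. hi q u q')"
    and lo_sound: "\<forall>q\<in>{1..N} - {iu}. \<forall>u\<in>{1..m}. \<forall>q'\<in>{1..N}.
                      \<forall>x\<in>R q. lo q u q' \<le> T u x (R q')"
    and hi_sound: "\<forall>q\<in>{1..N} - {iu}. \<forall>u\<in>{1..m}. \<forall>q'\<in>{1..N}.
                      \<forall>x\<in>R q. T u x (R q') \<le> hi q u q'"
    and unsafe_abs: "\<forall>u\<in>{1..m}. lo iu u iu = 1 \<and> hi iu u iu = 1"
    and supp_W: "\<forall>q\<in>{1..N}. \<forall>u\<in>{1..m}.
                   idx_P N hi q u \<subseteq> idx_W N f R W q u"
    and p_nonneg: "\<forall>i\<in>{1..N}. 0 \<le> p i"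
    and qi_in: "qi \<in> {1..N}" and a_in: "a \<in> {1..m}"
  shows "concave_on (UNIV \<times> {0..}) (\<lambda>(l, \<mu>). G l \<mu>)
    \<and> (\<exists>l0 \<mu>0 \<gamma>0 \<gamma>h0 \<pi>0. 0 \<le> \<mu>0
          \<and> (\<forall>l \<mu>. 0 \<le> \<mu> \<longrightarrow> G l \<mu> \<le> G l0 \<mu>0)
          \<and> lp_feasible (lo qi a) (hi qi a) c I J eps \<gamma>0 \<gamma>h0 \<pi>0
          \<and> (\<forall>\<gamma> \<gamma>h \<pi>. lp_feasible (lo qi a) (hi qi a) c I J eps \<gamma> \<gamma>h \<pi>
                 \<longrightarrow> lp_objective p I \<gamma>0 \<le> lp_objective p I \<gamma>)
          \<and> G l0 \<mu>0 = lp_objective p I \<gamma>0)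
    \<and> (\<forall>\<mu>\<ge>0. (\<forall>l. G l \<mu> \<le> (MAX j\<in>J. G (h j \<mu>) \<mu>))
          \<and> (\<exists>l. G l \<mu> = (MAX j\<in>J. G (h j \<mu>) \<mu>)))"
proof -
  have c_is: "c = cost_mat s R" and I_is: "I = idx_W N f R W qi a" and J_is: "J = idx_P N hi qi a"
    and eps_is: "eps = \<epsilon> powr s" and G_is0: "G = Gfun (lo qi a) (hi qi a) p (cost_mat s R) (idx_W N f R W qi a) (idx_P N hi qi a) (\<epsilon> powr s)"
    and h_is0: "h = (\<lambda>j \<mu>. hfun p (cost_mat s R) (idx_W N f R W qi a) j \<mu>)"
    using assms by simp_all
  have G_is: "G = Gfun (lo qi a) (hi qi a) p c I J eps" using G_is0 c_is I_is J_is eps_is by simp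
  have h_is: "h = (\<lambda>j \<mu>. hfun p c I j \<mu>)" using h_is0 c_is I_is by simp
  have I1: "I \<subseteq> {1..N}" by (auto simp: I_is idx_W_def)
  have J1: "J \<subseteq> {1..N}" by (auto simp: J_is idx_P_def)
  have finI: "finite I" using I1 finite_subset by blast
  have JI: "J \<subseteq> I" using supp_W qi_in a_in by (simp add: I_is J_is)
  have rng: "\<forall>q'\<in>{1..N}. 0 \<le> lo qi a q' \<and> lo qi a q' \<le> hi qi a q' \<and> hi qi a q' \<le> 1"
    using bnd_range qi_in a_in by blast
  have sums: "(\<Sum>q'\<in>{1..N}. lo qi a q') \<le> 1 \<and> 1 \<le> (\<Sum>q'\<in>{1..N}. hi qi a q')"
    using bnd_sum qi_in a_in by blast
  have hiJ: "(\<Sum>j\<in>J. hi qi a j) = (\<Sum>q'\<in>{1..N}. hi qi a q')"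
  proof (rule sum.mono_neutral_left)
    show "\<forall>i\<in>{1..N} - J. hi qi a i = 0"
    proof
      fix i assume i: "i \<in> {1..N} - J"
      then have "\<not> 0 < hi qi a i" by (auto simp: J_is idx_P_def)
      moreover have "0 \<le> hi qi a i"
      proof -
        have i1: "i \<in> {1..N}" using i by blast
        have "0 \<le> lo qi a i \<and> lo qi a i \<le> hi qi a i" using rng i1 by blast
        then show ?thesis by linarith
      qed
      ultimately show "hi qi a i = 0" by simp
    qed
  qed (use J1 in auto)
  have shi: "1 \<le> (\<Sum>j\<in>J. hi qi a j)" using hiJ sums by simp
  have Jne: "J \<noteq> {}" using shi by auto
  have slo: "(\<Sum>j\<in>J. lo qi a j) \<le> 1"
  proof -
    have "(\<Sum>j\<in>J. lo qi a j) \<le> (\<Sum>q'\<in>{1..N}. lo qi a q')"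
      using J1 rng by (intro sum_mono2) auto
    then show ?thesis using sums by simp
  qed
  have Rne: "R i \<noteq> {}" if "i \<in> I" for i using that by (auto simp: I_is idx_W_def)
  have c_nn: "\<forall>i\<in>I. \<forall>j\<in>J. 0 \<le> c i j"
  proof (intro ballI)
    fix i j assume i: "i \<in> I" and j: "j \<in> J"
    obtain x where x: "x \<in> R i" using Rne[OF i] by blast
    obtain y where y: "y \<in> R j" using Rne[of j] j JI by blast
    show "0 \<le> c i j" unfolding c_is cost_mat_def region_cost_def
      using x y by (intro cInf_greatest) auto
  qed
  have c_diag: "\<forall>j\<in>J. c j j = 0"
  proof
    fix j assume j: "j \<in> J"
    obtain y where y: "y \<in> R j" using Rne[of j] j JI by blast
    let ?S = "{norm (x - y) powr s | x y. x \<in> R j \<and> y \<in> R j}"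
    have "0 \<in> ?S" using y by force
    moreover have "bdd_below ?S" by (rule bdd_belowI[of _ 0]) auto
    ultimately have "Inf ?S \<le> 0" by (rule cInf_lower)
    moreover have "0 \<le> Inf ?S" using \<open>0 \<in> ?S\<close> by (intro cInf_greatest) auto
    ultimately show "c j j = 0" unfolding c_is cost_mat_def region_cost_def by simp
  qed
  interpret L: lpsetup "lo qi a" "hi qi a" p c I J eps
  proof
    show "finite I" "J \<subseteq> I" "J \<noteq> {}" by fact+
    show "\<forall>i\<in>I. 0 \<le> p i" using p_nonneg I1 by blast
    show "\<forall>i\<in>I. \<forall>j\<in>J. 0 \<le> c i j" "\<forall>j\<in>J. c j j = 0" by fact+
    show "\<forall>j\<in>J. 0 \<le> lo qi a j" "\<forall>j\<in>J. lo qi a j \<le> hi qi a j" using rng J1 by auto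
    show "(\<Sum>j\<in>J. lo qi a j) \<le> 1" "1 \<le> (\<Sum>j\<in>J. hi qi a j)" by fact+
    show "0 \<le> eps" by (simp add: eps_is)
  qed
  have part1: "concave_on (UNIV \<times> {0..}) (\<lambda>(l, \<mu>). G l \<mu>)" using L.concave by (simp add: G_is)
  have part3: "\<forall>\<mu>\<ge>0. (\<forall>l. G l \<mu> \<le> (MAX j\<in>J. G (h j \<mu>) \<mu>)) \<and> (\<exists>l. G l \<mu> = (MAX j\<in>J. G (h j \<mu>) \<mu>))"
    using L.max_part by (simp add: G_is h_is)
  obtain l0 \<mu>0 \<pi>0 where mu0: "0 \<le> \<mu>0" and allG: "\<forall>l \<mu>. 0 \<le> \<mu> \<longrightarrow> G l \<mu> \<le> G l0 \<mu>0"
    and K0: "L.inK \<pi>0" and C0: "L.Cf \<pi>0 \<le> eps" and opt0: "\<forall>\<pi>. L.inK \<pi> \<and> L.Cf \<pi> \<le> eps \<longrightarrow> L.Lf \<pi>0 \<le> L.Lf \<pi>"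
    and GL: "G l0 \<mu>0 = L.Lf \<pi>0"
    using L.strong unfolding G_is by blast
  define \<gamma>0 where "\<gamma>0 = (\<lambda>i. \<Sum>j\<in>J. \<pi>0 i j)"
  define \<gamma>h0 where "\<gamma>h0 = (\<lambda>j. \<Sum>i\<in>I. \<pi>0 i j)"
  have objeq: "lp_objective p I \<gamma> = L.Lf \<pi>" if "\<forall>i\<in>I. (\<Sum>j\<in>J. \<pi> i j) = \<gamma> i" for \<gamma> \<pi>
    unfolding lp_objective_def L.Lf_def
  proof (intro sum.cong refl)
    fix i assume i: "i \<in> I"
    then have "\<gamma> i = (\<Sum>j\<in>J. \<pi> i j)" using that by simp
    then show "\<gamma> i * p i = (\<Sum>j\<in>J. \<pi> i j * p i)" by (simp add: sum_distrib_right)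
  qed
  have feas0: "lp_feasible (lo qi a) (hi qi a) c I J eps \<gamma>0 \<gamma>h0 \<pi>0"
    using K0 C0 unfolding lp_feasible_def L.inK_def L.Cf_def \<gamma>0_def \<gamma>h0_def by simp
  have minimal: "lp_objective p I \<gamma>0 \<le> lp_objective p I \<gamma>"
    if F: "lp_feasible (lo qi a) (hi qi a) c I J eps \<gamma> \<gamma>h \<pi>" for \<gamma> \<gamma>h \<pi>
  proof -
    have "L.inK \<pi>" using F unfolding lp_feasible_def L.inK_def by simp
    moreover have "L.Cf \<pi> \<le> eps" using F unfolding lp_feasible_def L.Cf_def by simp
    ultimately have "L.Lf \<pi>0 \<le> L.Lf \<pi>" using opt0 by blast
    moreover have "lp_objective p I \<gamma> = L.Lf \<pi>" using F by (intro objeq) (simp add: lp_feasible_def)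
    moreover have "lp_objective p I \<gamma>0 = L.Lf \<pi>0" by (intro objeq) (simp add: \<gamma>0_def)
    ultimately show ?thesis by simp
  qed
  have "lp_objective p I \<gamma>0 = L.Lf \<pi>0" by (intro objeq) (simp add: \<gamma>0_def)
  then have obj0: "G l0 \<mu>0 = lp_objective p I \<gamma>0" using GL by simp
  have part2: "\<exists>l0 \<mu>0 \<gamma>0 \<gamma>h0 \<pi>0. 0 \<le> \<mu>0
          \<and> (\<forall>l \<mu>. 0 \<le> \<mu> \<longrightarrow> G l \<mu> \<le> G l0 \<mu>0)
          \<and> lp_feasible (lo qi a) (hi qi a) c I J eps \<gamma>0 \<gamma>h0 \<pi>0
          \<and> (\<forall>\<gamma> \<gamma>h \<pi>. lp_feasible (lo qi a) (hi qi a) c I J eps \<gamma> \<gamma>h \<pi>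
                 \<longrightarrow> lp_objective p I \<gamma>0 \<le> lp_objective p I \<gamma>)
          \<and> G l0 \<mu>0 = lp_objective p I \<gamma>0"
    using mu0 allG feas0 minimal obj0 by blast
  show ?thesis using part1 part2 part3 by blast
qed

end
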